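(* Let $N$ be a connected smooth manifold and $F:N\to\mathbb{R}^n$ a local diffeomorphism with $0\in F(N)$. Let $R_t$ denote the radial flow on $\mathbb{R}^n$ generated by the vector field $-\sum_i y^i\,\partial/\partial y^i$ (i.e. $R_t(y)=e^{-t}y$). Suppose there is a complete flow $\widetilde R_t$ on $N$ lifting $R_t$, i.e. $F\circ\widetilde R_t=R_t\circ F$ for all $t\in\mathbb{R}$. Then $F$ is a diffeomorphism onto $\mathbb{R}^n$. *)

theory Defs
  imports "HOL-Analysis.Analysis"
begin

fun iter_pd :: "'a::euclidean_space list \<Rightarrow> ('a \<Rightarrow> real) \<Rightarrow> 'a \<Rightarrow> real" where
  "iter_pd [] g = g"
| "iter_pd (v # vs) g = (\<lambda>x. frechet_derivative (iter_pd vs g) (at x) v)"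

definition smooth_on :: "'a::euclidean_space set \<Rightarrow> ('a \<Rightarrow> 'b::euclidean_space) \<Rightarrow> bool" where
  "smooth_on S f \<longleftrightarrow>
     (\<forall>b\<in>Basis. \<forall>vs. set vs \<subseteq> Basis \<longrightarrow>
        (\<forall>x\<in>S. iter_pd vs (\<lambda>z. f z \<bullet> b) differentiable (at x)))"

definition smooth_manifold :: "'a topology \<Rightarrow> ('a set \<times> ('a \<Rightarrow> 'm::euclidean_space)) set \<Rightarrow> bool" where
  "smooth_manifold X A \<longleftrightarrow>
     Hausdorff_space X \<and> second_countable X \<and>
     (\<forall>(U,\<phi>)\<in>A. openin X U \<and> open (\<phi> ` U) \<and>
                  homeomorphic_map (subtopology X U) (top_of_set (\<phi> ` U)) \<phi>) \<and>
     (\<Union>(fst ` A) = topspace X) \<and>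
     (\<forall>(U,\<phi>)\<in>A. \<forall>(V,\<psi>)\<in>A. smooth_on (\<phi> ` (U \<inter> V)) (\<psi> \<circ> inv_into U \<phi>))"

definition smooth_map_to :: "'a topology \<Rightarrow> ('a set \<times> ('a \<Rightarrow> 'm::euclidean_space)) set
                               \<Rightarrow> ('a \<Rightarrow> 'e::euclidean_space) \<Rightarrow> bool" where
  "smooth_map_to X A F \<longleftrightarrow>
     continuous_map X euclidean F \<and>
     (\<forall>(U,\<phi>)\<in>A. smooth_on (\<phi> ` U) (F \<circ> inv_into U \<phi>))"

definition smooth_map_from :: "'e::euclidean_space set \<Rightarrow> 'a topology
                               \<Rightarrow> ('a set \<times> ('a \<Rightarrow> 'm::euclidean_space)) set \<Rightarrow> ('e \<Rightarrow> 'a) \<Rightarrow> bool" where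
  "smooth_map_from S X A G \<longleftrightarrow>
     continuous_map (top_of_set S) X G \<and>
     (\<forall>(U,\<phi>)\<in>A. smooth_on {y\<in>S. G y \<in> U} (\<phi> \<circ> G))"

definition local_diffeomorphism :: "'a topology \<Rightarrow> ('a set \<times> ('a \<Rightarrow> 'm::euclidean_space)) set
                               \<Rightarrow> ('a \<Rightarrow> 'e::euclidean_space) \<Rightarrow> bool" where
  "local_diffeomorphism X A F \<longleftrightarrow>
     smooth_map_to X A F \<and>
     (\<forall>x\<in>topspace X. \<exists>W. openin X W \<and> x \<in> W \<and> open (F ` W) \<and>
        homeomorphic_map (subtopology X W) (top_of_set (F ` W)) F \<and>
        smooth_map_from (F ` W) X A (inv_into W F))"

definition diffeomorphism_onto :: "'a topology \<Rightarrow> ('a set \<times> ('a \<Rightarrow> 'm::euclidean_space)) set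
                               \<Rightarrow> ('a \<Rightarrow> 'e::euclidean_space) \<Rightarrow> 'e set \<Rightarrow> bool" where
  "diffeomorphism_onto X A F S \<longleftrightarrow>
     smooth_map_to X A F \<and> F ` topspace X = S \<and> inj_on F (topspace X) \<and>
     smooth_map_from S X A (inv_into (topspace X) F)"

definition complete_smooth_flow :: "'a topology \<Rightarrow> ('a set \<times> ('a \<Rightarrow> 'm::euclidean_space)) set
                               \<Rightarrow> (real \<Rightarrow> 'a \<Rightarrow> 'a) \<Rightarrow> bool" where
  "complete_smooth_flow X A \<Phi> \<longleftrightarrow>
     (\<forall>t. \<forall>x\<in>topspace X. \<Phi> t x \<in> topspace X) \<and>
     (\<forall>x\<in>topspace X. \<Phi> 0 x = x) \<and>
     (\<forall>s t. \<forall>x\<in>topspace X. \<Phi> (s + t) x = \<Phi> s (\<Phi> t x)) \<and>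
     continuous_map (prod_topology euclideanreal X) X (\<lambda>(t,x). \<Phi> t x) \<and>
     (\<forall>(U,\<phi>)\<in>A. \<forall>(V,\<psi>)\<in>A.
        smooth_on {(t,v). v \<in> \<phi> ` U \<and> \<Phi> t (inv_into U \<phi> v) \<in> V}
                  (\<lambda>(t,v). \<psi> (\<Phi> t (inv_into U \<phi> v))))"

definition radial_flow :: "real \<Rightarrow> 'e::euclidean_space \<Rightarrow> 'e" where
  "radial_flow t y = exp (- t) *\<^sub>R y"

end

theory Submission
  imports Defs
begin

lemma iter_pd_cong:
  assumes "open Om" "\<And>z. z \<in> Om \<Longrightarrow> f z = g z"
  shows "z \<in> Om \<Longrightarrow> iter_pd vs f z = iter_pd vs g z"
proof (induction vs arbitrary: z)
  case Nil
  then show ?case using assms by simp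
next
  case (Cons v vs)
  have "(\<lambda>f'. (iter_pd vs f has_derivative f') (at z)) = (\<lambda>f'. (iter_pd vs g has_derivative f') (at z))"
  proof (rule ext, rule iffI)
    fix f' assume "(iter_pd vs f has_derivative f') (at z)"
    then show "(iter_pd vs g has_derivative f') (at z)"
      using has_derivative_transform_within_open[OF _ assms(1) Cons.prems] Cons.IH by blast
  next
    fix f' assume "(iter_pd vs g has_derivative f') (at z)"
    then show "(iter_pd vs f has_derivative f') (at z)"
      using has_derivative_transform_within_open[OF _ assms(1) Cons.prems] Cons.IH by metis
  qed
  then show ?case by (simp add: frechet_derivative_def)
qed

lemma smooth_on_local:
  fixes f :: "'a::euclidean_space \<Rightarrow> 'b::euclidean_space"
  assumes "\<And>x. x \<in> S \<Longrightarrow> \<exists>Om T (g::'a \<Rightarrow> 'b). open Om \<and> x \<in> Om \<and> x \<in> T \<and> smooth_on T g \<and> (\<forall>z\<in>Om. f z = g z)"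
  shows "smooth_on S f"
  unfolding smooth_on_def
proof (intro ballI allI impI)
  fix b :: 'b and vs :: "'a list" and x assume b: "b \<in> Basis" and vs: "set vs \<subseteq> Basis" and x: "x \<in> S"
  obtain Om T g where Om: "open Om" "x \<in> Om" "x \<in> T" "smooth_on T g" "\<forall>z\<in>Om. f z = g z"
    using assms[OF x] by blast
  have d: "iter_pd vs (\<lambda>z. g z \<bullet> b) differentiable (at x)"
    using Om(3,4) b vs unfolding smooth_on_def by blast
  have eq: "\<And>z. z \<in> Om \<Longrightarrow> iter_pd vs (\<lambda>z. g z \<bullet> b) z = iter_pd vs (\<lambda>z. f z \<bullet> b) z"
    using iter_pd_cong[OF Om(1), of "\<lambda>z. g z \<bullet> b" "\<lambda>z. f z \<bullet> b"] Om(5) by auto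
  obtain D where "(iter_pd vs (\<lambda>z. g z \<bullet> b) has_derivative D) (at x)"
    using d unfolding differentiable_def by blast
  then have "(iter_pd vs (\<lambda>z. f z \<bullet> b) has_derivative D) (at x)"
    by (rule has_derivative_transform_within_open[OF _ Om(1) Om(2)]) (rule eq)
  then show "iter_pd vs (\<lambda>z. f z \<bullet> b) differentiable (at x)"
    unfolding differentiable_def by blast
qed


lemma inverse_smooth:
  fixes X :: "'a topology"
    and A :: "('a set \<times> ('a \<Rightarrow> 'm::euclidean_space)) set"
    and F :: "'a \<Rightarrow> 'e::euclidean_space"
  assumes LD: "local_diffeomorphism X A F" and inj: "inj_on F (topspace X)"
    and surj: "F ` topspace X = UNIV"
  shows "smooth_map_from UNIV X A (inv_into (topspace X) F)"
proof -
  define G where "G = inv_into (topspace X) F"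
  have loc: "\<exists>W. openin X W \<and> y \<in> F ` W \<and> open (F ` W) \<and>
        smooth_map_from (F ` W) X A (inv_into W F) \<and> (\<forall>y'\<in>F ` W. G y' = inv_into W F y')" for y
  proof -
    obtain x where x: "x \<in> topspace X" "F x = y" using surj by (metis UNIV_I imageE)
    obtain W where W: "openin X W" "x \<in> W" "open (F ` W)"
        "smooth_map_from (F ` W) X A (inv_into W F)"
      using LD x(1) unfolding local_diffeomorphism_def by blast
    have sub: "W \<subseteq> topspace X" using W(1) openin_subset by blast
    have "G y' = inv_into W F y'" if yW: "y' \<in> F ` W" for y'
    proof -
      obtain w where w: "w \<in> W" "y' = F w" using yW by blast
      have "inj_on F W" using inj sub inj_on_subset by blast
      then show ?thesis using w sub inj unfolding G_def by (simp add: inv_into_f_f subsetD)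
    qed
    then show ?thesis using W x by blast
  qed
  have cont: "continuous_map (top_of_set UNIV) X G"
    unfolding continuous_map_def
  proof (intro conjI allI impI)
    show "G \<in> topspace (top_of_set UNIV) \<rightarrow> topspace X"
    proof -
      have Gy: "G y \<in> topspace X" for y
      proof -
        have "y \<in> F ` topspace X" using surj by simp
        then show ?thesis unfolding G_def by (rule inv_into_into)
      qed
      show ?thesis by (rule Pi_I) (rule Gy)
    qed
  next
    fix U assume U: "openin X U"
    have "open {y. G y \<in> U}"
    proof (rule open_subopen[THEN iffD2], rule ballI)
      fix y assume "y \<in> {y. G y \<in> U}"
      then have yU: "G y \<in> U" by simp
      obtain W where W: "openin X W" "y \<in> F ` W" "open (F ` W)"
        "smooth_map_from (F ` W) X A (inv_into W F)" "\<forall>y'\<in>F ` W. G y' = inv_into W F y'"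
        using loc by blast
      have c: "continuous_map (top_of_set (F ` W)) X (inv_into W F)"
        using W(4) unfolding smooth_map_from_def by blast
      have "openin (top_of_set (F ` W)) {y' \<in> topspace (top_of_set (F ` W)). inv_into W F y' \<in> U}"
        by (rule openin_continuous_map_preimage[OF c U])
      then have o: "open {y' \<in> F ` W. inv_into W F y' \<in> U}"
        using W(3) openin_open_eq by fastforce
      show "\<exists>T. open T \<and> y \<in> T \<and> T \<subseteq> {y. G y \<in> U}"
        by (rule exI[of _ "{y' \<in> F ` W. inv_into W F y' \<in> U}"]) (use o W yU in auto)
    qed
    then show "openin (top_of_set UNIV) {x \<in> topspace (top_of_set UNIV). G x \<in> U}"
      by simp
  qed
  have sm: "smooth_on {y \<in> UNIV. G y \<in> U} (\<phi> \<circ> G)" if "(U, \<phi>) \<in> A" for U \<phi>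
  proof (rule smooth_on_local)
    fix y assume yU: "y \<in> {y \<in> UNIV. G y \<in> U}"
    obtain W where W: "openin X W" "y \<in> F ` W" "open (F ` W)"
        "smooth_map_from (F ` W) X A (inv_into W F)" "\<forall>y'\<in>F ` W. G y' = inv_into W F y'"
      using loc by blast
    have "smooth_on {y' \<in> F ` W. inv_into W F y' \<in> U} (\<phi> \<circ> inv_into W F)"
      using W(4) that unfolding smooth_map_from_def by blast
    then show "\<exists>Om T g. open Om \<and> y \<in> Om \<and> y \<in> T \<and> smooth_on T g \<and> (\<forall>z\<in>Om. (\<phi> \<circ> G) z = g z)"
      using W yU by (intro exI[of _ "F ` W"] exI[of _ "{y' \<in> F ` W. inv_into W F y' \<in> U}"] exI[of _ "\<phi> \<circ> inv_into W F"]) auto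
  qed
  show ?thesis unfolding smooth_map_from_def G_def[symmetric] using cont sm by blast
qed


lemma exists_s:
  fixes y :: "'e::real_normed_vector" and r :: real
  assumes "r > 0"
  shows "\<exists>s\<ge>0. norm (exp (- s) *\<^sub>R y) < r"
proof -
  define s where "s = norm y / r"
  have s0: "s \<ge> 0" using assms by (simp add: s_def)
  have "s < exp s" using exp_ge_add_one_self[of s] by linarith
  then have "norm y < r * exp s" using assms by (simp add: s_def field_simps)
  then have "norm y / exp s < r" by (simp add: field_simps)
  then have "norm (exp (- s) *\<^sub>R y) < r" by (simp add: exp_minus field_simps)
  then show ?thesis using s0 by blast
qed

theorem corollary1:
  fixes X :: "'a topology"
    and A :: "('a set \<times> ('a \<Rightarrow> 'm::euclidean_space)) set"
    and F :: "'a \<Rightarrow> 'e::euclidean_space"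
    and \<Phi> :: "real \<Rightarrow> 'a \<Rightarrow> 'a"
  assumes "smooth_manifold X A"
    and "connected_space X"
    and "local_diffeomorphism X A F"
    and "0 \<in> F ` topspace X"
    and "complete_smooth_flow X A \<Phi>"
    and "\<forall>t. \<forall>x\<in>topspace X. F (\<Phi> t x) = radial_flow t (F x)"
  shows "diffeomorphism_onto X A F UNIV"
proof -
  note MF = assms(1) and conn = assms(2) and LD = assms(3) and FL = assms(5)
  have Haus: "Hausdorff_space X" using MF unfolding smooth_manifold_def by blast
  have Fsm: "smooth_map_to X A F" using LD unfolding local_diffeomorphism_def by blast
  have Fc: "continuous_map X euclidean F" using Fsm unfolding smooth_map_to_def by blast
  have LDl: "\<forall>x\<in>topspace X. \<exists>W. openin X W \<and> x \<in> W \<and> open (F ` W) \<and>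
        homeomorphic_map (subtopology X W) (top_of_set (F ` W)) F \<and>
        smooth_map_from (F ` W) X A (inv_into W F)"
    using LD unfolding local_diffeomorphism_def by blast
  have Pin: "\<And>t x. x \<in> topspace X \<Longrightarrow> \<Phi> t x \<in> topspace X"
   and P0: "\<And>x. x \<in> topspace X \<Longrightarrow> \<Phi> 0 x = x"
   and Padd: "\<And>s t x. x \<in> topspace X \<Longrightarrow> \<Phi> (s + t) x = \<Phi> s (\<Phi> t x)"
   and Pc: "continuous_map (prod_topology euclideanreal X) X (\<lambda>(t,x). \<Phi> t x)"
    using FL unfolding complete_smooth_flow_def by blast+
  have FP: "\<And>t x. x \<in> topspace X \<Longrightarrow> F (\<Phi> t x) = exp (- t) *\<^sub>R F x"
    using assms(6) by (simp add: radial_flow_def)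
  have Pinv: "\<And>t x. x \<in> topspace X \<Longrightarrow> \<Phi> (- t) (\<Phi> t x) = x"
    using Padd P0 by (metis add.left_inverse)
  have Pct: "continuous_map X X (\<Phi> t)" for t
  proof -
    have "continuous_map X (prod_topology euclideanreal X) (\<lambda>x. (t, x))"
      by (intro continuous_map_pairedI continuous_map_const[THEN iffD2] continuous_map_id) auto
    from continuous_map_compose[OF this Pc] show ?thesis by (simp add: o_def)
  qed
  have Pcx: "continuous_map (top_of_set {0..}) X (\<lambda>t. \<Phi> t x)" if "x \<in> topspace X" for x
  proof -
    have "continuous_map (top_of_set {0..}) (prod_topology euclideanreal X) (\<lambda>t. (t, x))"
      by (intro continuous_map_pairedI continuous_map_from_subtopology continuous_map_id)
         (use that in auto)
    from continuous_map_compose[OF this Pc] show ?thesis by (simp add: o_def)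
  qed
  obtain p where p: "p \<in> topspace X" "F p = 0" using assms(4) by force
  obtain W where W: "openin X W" "p \<in> W" "open (F ` W)"
      "homeomorphic_map (subtopology X W) (top_of_set (F ` W)) F"
      "smooth_map_from (F ` W) X A (inv_into W F)"
    using LDl p(1) by blast
  have Wsub: "W \<subseteq> topspace X" using W(1) openin_subset by blast
  have injW: "inj_on F W"
    using homeomorphic_imp_injective_map[OF W(4)] Wsub by (simp add: Int_absorb1)
  define g where "g = inv_into W F"
  have gc: "continuous_map (top_of_set (F ` W)) X g"
    using W(5) unfolding smooth_map_from_def g_def by blast
  obtain r where r: "r > 0" "ball 0 r \<subseteq> F ` W"
    using W(2,3) p(2) open_contains_ball by (metis image_eqI)
  define Q where "Q = {w \<in> topspace X. F w \<in> ball 0 r}"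
  have Qo: "openin X Q" unfolding Q_def
    by (rule openin_continuous_map_preimage[OF Fc]) simp
  define W0 where "W0 = W \<inter> Q"
  have W0o: "openin X W0" unfolding W0_def using Qo W(1) by blast
  have W0Q: "W0 \<subseteq> Q" unfolding W0_def by blast
  have gF: "g (F w) \<in> W" "F (g (F w)) = F w" if "w \<in> Q" for w
  proof -
    have "F w \<in> F ` W" using that r(2) unfolding Q_def by auto
    then show "g (F w) \<in> W" "F (g (F w)) = F w" unfolding g_def
      by (auto intro: inv_into_into f_inv_into_f)
  qed
  have W0char: "w \<in> W0 \<longleftrightarrow> g (F w) = w" if "w \<in> Q" for w
  proof
    assume "w \<in> W0"
    then have "w \<in> W" unfolding W0_def by blast
    then show "g (F w) = w" unfolding g_def by (rule inv_into_f_f[OF injW])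
  next
    assume "g (F w) = w"
    then have "w \<in> W" using gF(1)[OF that] by simp
    then show "w \<in> W0" using that unfolding W0_def by blast
  qed
  define D where "D = Q - W0"
  have gFc: "continuous_map (subtopology X Q) X (\<lambda>w. g (F w))"
  proof -
    have "continuous_map (subtopology X Q) (top_of_set (F ` W)) F"
      by (rule continuous_map_into_subtopology[OF continuous_map_from_subtopology[OF Fc]])
         (use r(2) in \<open>auto simp: Q_def\<close>)
    from continuous_map_compose[OF this gc] show ?thesis by (simp add: o_def)
  qed
  have Do: "openin X D"
    unfolding openin_subopen[of X D]
  proof
    fix w assume wD: "w \<in> D"
    then have wQ: "w \<in> Q" and ne: "g (F w) \<noteq> w" using W0char unfolding D_def by auto
    have "g (F w) \<in> topspace X" using gF(1)[OF wQ] Wsub by blast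
    moreover have "w \<in> topspace X" using wQ unfolding Q_def by blast
    ultimately obtain U V where UV: "openin X U" "openin X V" "w \<in> U" "g (F w) \<in> V" "disjnt U V"
      using Haus ne unfolding Hausdorff_space_def by metis
    have "openin (subtopology X Q) {z \<in> topspace (subtopology X Q). g (F z) \<in> V}"
      by (rule openin_continuous_map_preimage[OF gFc UV(2)])
    then have o1: "openin X {z \<in> Q. g (F z) \<in> V}"
      using Qo openin_trans_full
      by (metis (no_types, lifting) Collect_cong Int_iff topspace_subtopology_subset openin_subset)
    show "\<exists>T. openin X T \<and> w \<in> T \<and> T \<subseteq> D"
    proof (intro exI conjI)
      show "openin X ({z \<in> Q. g (F z) \<in> V} \<inter> U)" using o1 UV(1) by blast
      show "w \<in> {z \<in> Q. g (F z) \<in> V} \<inter> U" using wQ UV by blast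
      show "{z \<in> Q. g (F z) \<in> V} \<inter> U \<subseteq> D"
        using UV(5) W0char unfolding D_def disjnt_def by auto
    qed
  qed
  have PQ: "\<Phi> t x \<in> Q" if "x \<in> Q" "t \<ge> 0" for t x
  proof -
    have x: "x \<in> topspace X" "norm (F x) < r" using that unfolding Q_def by auto
    have "norm (F (\<Phi> t x)) = exp (- t) * norm (F x)" using FP[OF x(1)] by simp
    also have "\<dots> \<le> norm (F x)" using that(2) by (intro mult_left_le_one_le) auto
    finally show ?thesis using x Pin unfolding Q_def by auto
  qed
  have L1: "\<Phi> u x \<in> W0" if x: "x \<in> W0" "u \<ge> 0" for x u
  proof -
    have xt: "x \<in> topspace X" using x W0Q unfolding Q_def by blast
    define E where "E = {t \<in> topspace (top_of_set {0::real..}). \<Phi> t x \<in> W0}"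
    have Eo: "openin (top_of_set {0..}) E" unfolding E_def
      by (rule openin_continuous_map_preimage[OF Pcx[OF xt] W0o])
    have Eo2: "openin (top_of_set {0..}) {t \<in> topspace (top_of_set {0::real..}). \<Phi> t x \<in> D}"
      by (rule openin_continuous_map_preimage[OF Pcx[OF xt] Do])
    have "topspace (top_of_set {0::real..}) - E = {t \<in> topspace (top_of_set {0::real..}). \<Phi> t x \<in> D}"
      using PQ x W0Q unfolding E_def D_def by auto
    then have Ec: "closedin (top_of_set {0..}) E" using Eo2 unfolding closedin_def E_def by auto
    have cs: "connected_space (top_of_set {0::real..})"
      by (rule connected_space_subtopology) (simp add: convex_connected)
    have "0 \<in> E" using x P0[OF xt] unfolding E_def by simp
    then have "E = topspace (top_of_set {0..})"
      using cs Eo Ec unfolding connected_space_clopen_in by blast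
    then show ?thesis using x(2) unfolding E_def by auto
  qed
  have L2: "w \<in> W0" if w: "w \<in> Q" "u \<ge> 0" "\<Phi> u w \<in> W0" for w u
  proof -
    have wt: "w \<in> topspace X" using w unfolding Q_def by blast
    define v where "v = g (F w)"
    have vW0: "v \<in> W0" using gF[OF w(1)] W0char w(1) unfolding v_def W0_def Q_def
      by (metis (no_types, lifting) IntI Int_iff W0_def Wsub mem_Collect_eq subsetD w(1) Q_def)
    have vt: "v \<in> topspace X" using vW0 W0Q unfolding Q_def by blast
    have "\<Phi> u v \<in> W0" using L1 vW0 w(2) by blast
    moreover have "F (\<Phi> u v) = F (\<Phi> u w)" using FP vt wt gF(2)[OF w(1)] unfolding v_def by simp
    ultimately have "\<Phi> u v = \<Phi> u w" using w(3) injW unfolding W0_def inj_on_def by blast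
    then have "v = w" using Pinv vt wt by metis
    then show ?thesis using vW0 by simp
  qed
  have L3: "\<Phi> s x \<in> W0" if x: "x \<in> topspace X" "u \<ge> 0" "\<Phi> u x \<in> W0" "s \<ge> 0" "\<Phi> s x \<in> Q"
    for x u s
  proof (cases "u \<le> s")
    case True
    have "\<Phi> (s - u) (\<Phi> u x) \<in> W0" using L1 x True by simp
    then show ?thesis using Padd[OF x(1), of "s - u" u] by simp
  next
    case False
    have "\<Phi> (u - s) (\<Phi> s x) \<in> W0" using Padd[OF x(1), of "u - s" s] x by simp
    then show ?thesis using L2[of "\<Phi> s x" "u - s"] x False by simp
  qed
  define T where "T = {x \<in> topspace X. \<exists>u\<ge>0. \<Phi> u x \<in> W0}"
  have To: "openin X T"
  proof -
    have "T = (\<Union>u\<in>{0..}. {x \<in> topspace X. \<Phi> u x \<in> W0})" unfolding T_def by auto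
    moreover have "openin X {x \<in> topspace X. \<Phi> u x \<in> W0}" for u
      by (rule openin_continuous_map_preimage[OF Pct W0o])
    ultimately show ?thesis by auto
  qed
  have Tc: "openin X (topspace X - T)"
    unfolding openin_subopen[of X "topspace X - T"]
  proof
    fix x assume x: "x \<in> topspace X - T"
    obtain s where s: "s \<ge> 0" "norm (exp (- s) *\<^sub>R F x) < r" using exists_s[OF r(1)] by blast
    have sQ: "\<Phi> s x \<in> Q" using s x FP Pin unfolding Q_def by auto
    have sD: "\<Phi> s x \<in> D" using sQ x s(1) unfolding D_def T_def by auto
    show "\<exists>T'. openin X T' \<and> x \<in> T' \<and> T' \<subseteq> topspace X - T"
    proof (intro exI conjI)
      show "openin X {z \<in> topspace X. \<Phi> s z \<in> D}"
        by (rule openin_continuous_map_preimage[OF Pct Do])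
      show "x \<in> {z \<in> topspace X. \<Phi> s z \<in> D}" using x sD by blast
      show "{z \<in> topspace X. \<Phi> s z \<in> D} \<subseteq> topspace X - T"
        using L3 s(1) unfolding T_def D_def by blast
    qed
  qed
  have pT: "p \<in> T" using p P0 W(2) r(1) unfolding T_def W0_def Q_def by force
  have Tall: "T = topspace X"
    using conn To Tc pT unfolding connected_space_clopen_in closedin_def T_def by blast
  have key: "\<exists>s\<ge>0. \<Phi> s x \<in> W0 \<and> \<Phi> s x' \<in> W0"
    if x: "x \<in> topspace X" "x' \<in> topspace X" "F x = F x'" for x x'
  proof -
    obtain s where s: "s \<ge> 0" "norm (exp (- s) *\<^sub>R F x) < r" using exists_s[OF r(1)] by blast
    have "\<Phi> s x \<in> Q" "\<Phi> s x' \<in> Q" using s x FP Pin unfolding Q_def by auto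
    moreover have "x \<in> T" "x' \<in> T" using x Tall by auto
    ultimately show ?thesis using L3 s(1) x unfolding T_def by blast
  qed
  have inj: "inj_on F (topspace X)"
  proof (rule inj_onI)
    fix x x' assume x: "x \<in> topspace X" "x' \<in> topspace X" "F x = F x'"
    obtain s where s: "s \<ge> 0" "\<Phi> s x \<in> W0" "\<Phi> s x' \<in> W0" using key[OF x] by blast
    have "F (\<Phi> s x) = F (\<Phi> s x')" using FP x by simp
    then have "\<Phi> s x = \<Phi> s x'" using s injW unfolding W0_def inj_on_def by blast
    then show "x = x'" using Pinv x by metis
  qed
  have surj: "F ` topspace X = UNIV"
  proof (intro set_eqI iffI)
    fix y :: 'e assume "y \<in> UNIV"
    obtain s where s: "s \<ge> 0" "norm (exp (- s) *\<^sub>R y) < r" using exists_s[OF r(1)] by blast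
    define v where "v = g (exp (- s) *\<^sub>R y)"
    have yW: "exp (- s) *\<^sub>R y \<in> F ` W" using s r(2) by auto
    have "v \<in> W" using yW unfolding v_def g_def by (rule inv_into_into)
    then have vt: "v \<in> topspace X" using Wsub by blast
    have Fv: "F v = exp (- s) *\<^sub>R y"
      using yW unfolding v_def g_def by (rule f_inv_into_f)
    have "F (\<Phi> (- s) v) = y" using FP[OF vt] Fv by (simp add: exp_minus)
    then show "y \<in> F ` topspace X" using Pin[OF vt] by force
  qed simp
  show ?thesis
    unfolding diffeomorphism_onto_def
    by (intro conjI Fsm surj inj inverse_smooth[OF LD inj surj])
qed

end
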